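(* For each positive integer $n$, \[ p^{(2)}(n) = \frac{1}{2}\Bigl\{ \sum_{j=1}^{n-1} d(j)\, d(n-j) + d(n) - \sigma(n)\Bigr\}. \]
   Context: $p^{(2)}(n)$ is the number of partitions of $n$ having exactly two distinct part sizes; $d(n)$ is the number of positive divisors of $n$; $\sigma(n) = \sum_{d \mid n} d$. *)

theory Defs
  imports Complex_Main "HOL-Library.Multiset"
begin

definition partitions :: "nat \<Rightarrow> nat multiset set" where
  "partitions n = {M. (\<forall>x\<in>#M. x > 0) \<and> sum_mset M = n}"

definition p2 :: "nat \<Rightarrow> nat" where
  "p2 n = card {M \<in> partitions n. card (set_mset M) = 2}"

definition ndiv :: "nat \<Rightarrow> nat" where
  "ndiv n = card {d. d dvd n \<and> d > 0}"

definition sigma :: "nat \<Rightarrow> nat" where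
  "sigma n = (\<Sum>d\<in>{d. d dvd n \<and> d > 0}. d)"

end

theory Submission
  imports Defs
begin

definition Dp :: "nat \<Rightarrow> (nat \<times> nat) set" where
  "Dp j = {(a,m). a * m = j}"

lemma divs_finite: "j > 0 \<Longrightarrow> finite {d::nat. d dvd j \<and> d > 0}"
  by (rule finite_subset[of _ "{d. d dvd j}"]) auto

lemma card_Dp: assumes "j > 0" shows "card (Dp j) = ndiv j"
proof -
  have "Dp j = (\<lambda>d. (d, j div d)) ` {d. d dvd j \<and> d > 0}"
    using assms by (auto simp: Dp_def image_iff intro!: exI[of _ "fst _"])
  moreover have "inj_on (\<lambda>d. (d, j div d)) {d. d dvd j \<and> d > 0}"
    by (auto simp: inj_on_def)
  ultimately show ?thesis by (simp add: card_image ndiv_def)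
qed

lemma finite_Dp: "j > 0 \<Longrightarrow> finite (Dp j)"
proof -
  assume "j > 0"
  have "Dp j \<subseteq> {0..j} \<times> {0..j}"
    using \<open>j>0\<close> by (auto simp: Dp_def dest: dvd_imp_le[of _ j, rotated] intro: dvd_imp_le dvd_triv_left dvd_triv_right)
  then show ?thesis by (rule finite_subset) auto
qed

definition Q :: "nat \<Rightarrow> (nat \<times> nat \<times> nat \<times> nat) set" where
  "Q n = {(a,m,b,k). a > 0 \<and> m > 0 \<and> b > 0 \<and> k > 0 \<and> a*m + b*k = n}"

lemma card_Q: "card (Q n) = (\<Sum>j=1..n-1. ndiv j * ndiv (n - j))"
proof -
  let ?S = "SIGMA j:{1..n-1}. Dp j \<times> Dp (n-j)"
  let ?f = "\<lambda>(j::nat,(a::nat,m::nat),(b::nat,k::nat)). (a,m,b,k)"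
  have inj: "inj_on ?f ?S" by (auto simp: inj_on_def Dp_def)
  have img: "?f ` ?S = Q n"
  proof
    show "?f ` ?S \<subseteq> Q n"
    proof
      fix q assume "q \<in> ?f ` ?S"
      then obtain j a m b k where q: "q = (a,m,b,k)" "j \<in> {1..n-1}" "a*m = j" "b*k = n-j"
        by (fastforce simp: Dp_def)
      have "n - j > 0" using q(2) by auto
      then have "b*k > 0" using q by simp
      then have "b > 0" "k > 0" by auto
      then show "q \<in> Q n" using q by (auto simp: Q_def)
    qed
    show "Q n \<subseteq> ?f ` ?S"
    proof
      fix q assume "q \<in> Q n"
      then obtain a m b k where q: "q = (a,m,b,k)" "a > 0" "m > 0" "b > 0" "k > 0" "a*m+b*k = n"
        by (auto simp: Q_def)
      have "a*m \<ge> 1" "b*k \<ge> 1" using q by auto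
      then have "a*m \<le> n - 1" using q by linarith
      then have "(a*m,(a,m),(b,k)) \<in> ?S" using q by (auto simp: Dp_def)
      then show "q \<in> ?f ` ?S" using q by (auto intro!: image_eqI[where x="(a*m,(a,m),(b,k))"])
    qed
  qed
  have "card (Q n) = card ?S" using card_image[OF inj] img by simp
  also have "\<dots> = (\<Sum>j=1..n-1. card (Dp j \<times> Dp (n-j)))"
    by (rule card_SigmaI) (auto intro!: finite_Dp finite_cartesian_product)
  also have "\<dots> = (\<Sum>j=1..n-1. ndiv j * ndiv (n - j))"
    by (rule sum.cong) (auto simp: card_cartesian_product card_Dp)
  finally show ?thesis .
qed

definition Qeq :: "nat \<Rightarrow> (nat \<times> nat \<times> nat \<times> nat) set" where
  "Qeq n = {q \<in> Q n. fst q = fst (snd (snd q))}"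

lemma sum_div_divisors:
  assumes "n > 0"
  shows "(\<Sum>a\<in>{d. d dvd n \<and> d > 0}. n div a) = sigma n"
  unfolding sigma_def
  by (rule sum.reindex_bij_witness[where i="\<lambda>d. n div d" and j="\<lambda>d. n div d"])
     (use assms in \<open>auto simp: dvd_div_eq_0_iff intro: dvd_div_mult_self\<close>)

lemma card_Qeq:
  assumes "n > 0"
  shows "card (Qeq n) + ndiv n = sigma n"
proof -
  let ?A = "{d. d dvd n \<and> d > 0}"
  let ?E = "\<lambda>a. {(m,k). m > 0 \<and> k > 0 \<and> m + k = n div a}"
  let ?S = "SIGMA a:?A. ?E a"
  let ?f = "\<lambda>(a::nat,(m::nat,k::nat)). (a,m,a,k)"
  have inj: "inj_on ?f ?S" by (auto simp: inj_on_def)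
  have img: "?f ` ?S = Qeq n"
  proof
    show "?f ` ?S \<subseteq> Qeq n"
    proof
      fix q assume "q \<in> ?f ` ?S"
      then obtain a m k where q: "q = (a,m,a,k)" "a dvd n" "a > 0" "m > 0" "k > 0" "m + k = n div a"
        by fastforce
      have "a * (m + k) = n" using q by simp
      then show "q \<in> Qeq n" using q by (auto simp: Qeq_def Q_def algebra_simps)
    qed
    show "Qeq n \<subseteq> ?f ` ?S"
    proof
      fix q assume "q \<in> Qeq n"
      then obtain a m k where q: "q = (a,m,a,k)" "a > 0" "m > 0" "k > 0" "a*m + a*k = n"
        by (auto simp: Qeq_def Q_def)
      have "n = a * (m+k)" using q by (simp add: algebra_simps)
      then have "a dvd n" "m + k = n div a" using q by auto
      then have "(a,(m,k)) \<in> ?S" using q by auto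
      then show "q \<in> ?f ` ?S" using q by (auto intro!: image_eqI[where x="(a,(m,k))"])
    qed
  qed
  have cE: "card (?E a) = n div a - 1" for a
  proof -
    have "?E a = (\<lambda>m. (m, n div a - m)) ` {1..<n div a}" by (auto simp: image_iff)
    moreover have "inj_on (\<lambda>m. (m, n div a - m)) {1..<n div a}" by (auto simp: inj_on_def)
    ultimately show ?thesis by (simp add: card_image)
  qed
  have fE: "finite (?E a)" for a
  proof -
    have "?E a = (\<lambda>m. (m, n div a - m)) ` {1..<n div a}" by (auto simp: image_iff)
    then show ?thesis by simp
  qed
  have "card (Qeq n) = card ?S" using card_image[OF inj] img by simp
  also have "\<dots> = (\<Sum>a\<in>?A. n div a - 1)"
    using divs_finite[OF assms] fE cE by (simp)
  finally have 1: "card (Qeq n) = (\<Sum>a\<in>?A. n div a - 1)" .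
  have "(\<Sum>a\<in>?A. n div a - 1) + ndiv n = (\<Sum>a\<in>?A. (n div a - 1) + 1)"
    by (subst sum.distrib) (simp add: ndiv_def)
  also have "\<dots> = (\<Sum>a\<in>?A. n div a)"
  proof (rule sum.cong)
    fix a assume "a \<in> ?A"
    then have "n div a \<ge> 1" using assms by (auto simp: dvd_div_eq_0_iff Suc_le_eq)
    then show "n div a - 1 + 1 = n div a" by simp
  qed simp
  finally show ?thesis using 1 sum_div_divisors[OF assms] by simp
qed

definition Qlt :: "nat \<Rightarrow> (nat \<times> nat \<times> nat \<times> nat) set" where
  "Qlt n = {q \<in> Q n. fst q < fst (snd (snd q))}"
definition Qgt :: "nat \<Rightarrow> (nat \<times> nat \<times> nat \<times> nat) set" where
  "Qgt n = {q \<in> Q n. fst q > fst (snd (snd q))}"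

lemma finite_Q: "finite (Q n)"
proof -
  have "Q n \<subseteq> {0..n} \<times> {0..n} \<times> {0..n} \<times> {0..n}"
  proof
    fix q assume "q \<in> Q n"
    then obtain a m b k where q: "q = (a,m,b,k)" "a > 0" "m > 0" "b > 0" "k > 0" "a*m+b*k = n"
      by (auto simp: Q_def)
    have "a \<le> a*m" "m \<le> a*m" "b \<le> b*k" "k \<le> b*k" using q by auto
    then have "a \<le> n" "m \<le> n" "b \<le> n" "k \<le> n" using q(6) by linarith+
    then show "q \<in> {0..n} \<times> {0..n} \<times> {0..n} \<times> {0..n}" using q by auto
  qed
  then show ?thesis by (rule finite_subset) auto
qed

lemma card_Qgt: "card (Qgt n) = card (Qlt n)"
proof -
  let ?s = "\<lambda>(a::nat,m::nat,b::nat,k::nat). (b,k,a,m)"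
  have "Qgt n = ?s ` Qlt n"
  proof
    show "Qgt n \<subseteq> ?s ` Qlt n"
    proof
      fix q assume "q \<in> Qgt n"
      then obtain a m b k where q: "q = (a,m,b,k)" "(b,k,a,m) \<in> Qlt n"
        by (auto simp: Qgt_def Qlt_def Q_def)
      then show "q \<in> ?s ` Qlt n" by (auto intro!: image_eqI[where x="(b,k,a,m)"])
    qed
    show "?s ` Qlt n \<subseteq> Qgt n" by (auto simp: Qgt_def Qlt_def Q_def)
  qed
  moreover have "inj_on ?s (Qlt n)" by (auto simp: inj_on_def)
  ultimately show ?thesis by (simp add: card_image)
qed

lemma card_Q_split: "card (Q n) = card (Qeq n) + card (Qlt n) + card (Qgt n)"
proof -
  have "Q n = Qeq n \<union> Qlt n \<union> Qgt n" by (auto simp: Qeq_def Qlt_def Qgt_def)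
  moreover have "finite (Qeq n)" "finite (Qlt n)" "finite (Qgt n)"
    using finite_Q by (auto simp: Qeq_def Qlt_def Qgt_def)
  moreover have "Qeq n \<inter> Qlt n = {}" "(Qeq n \<union> Qlt n) \<inter> Qgt n = {}"
    by (auto simp: Qeq_def Qlt_def Qgt_def)
  ultimately show ?thesis by (simp add: card_Un_disjoint)
qed

lemma card_Qlt: "card (Qlt n) = p2 n"
proof -
  let ?g = "\<lambda>(a::nat,m::nat,b::nat,k::nat). replicate_mset m a + replicate_mset k b"
  have inj: "inj_on ?g (Qlt n)"
  proof (rule inj_onI)
    fix q q' assume "q \<in> Qlt n" "q' \<in> Qlt n" and eq: "?g q = ?g q'"
    then obtain a m b k a' m' b' k' where q: "q = (a,m,b,k)" "q' = (a',m',b',k')"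
      "a < b" "m > 0" "k > 0" "a' < b'" "m' > 0" "k' > 0"
      by (auto simp: Qlt_def Q_def)
    let ?M = "replicate_mset m a + replicate_mset k b"
    have M: "?M = replicate_mset m' a' + replicate_mset k' b'" using eq q by simp
    have "set_mset ?M = {a,b}" using q by auto
    moreover have "set_mset (replicate_mset m' a' + replicate_mset k' b') = {a',b'}" using q by auto
    ultimately have "{a,b} = {a',b'}" using M by simp
    then have ab: "a = a'" "b = b'" using q by (auto simp: doubleton_eq_iff)
    have c1: "count ?M a = m" "count ?M b = k" using q by auto
    have c2: "count (replicate_mset m' a' + replicate_mset k' b') a = m'"
      "count (replicate_mset m' a' + replicate_mset k' b') b = k'" using q ab by auto
    have e1: "count ?M a = count (replicate_mset m' a' + replicate_mset k' b') a"
      using M by (rule arg_cong)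
    have e2: "count ?M b = count (replicate_mset m' a' + replicate_mset k' b') b"
      using M by (rule arg_cong)
    have "m = m'" using e1 c1(1) c2(1) by linarith
    moreover have "k = k'" using e2 c1(2) c2(2) by linarith
    ultimately show "q = q'" using q(1,2) ab by (simp only:)
  qed
  have img: "?g ` Qlt n = {M \<in> partitions n. card (set_mset M) = 2}"
  proof
    show "?g ` Qlt n \<subseteq> {M \<in> partitions n. card (set_mset M) = 2}"
    proof
      fix M assume "M \<in> ?g ` Qlt n"
      then obtain a m b k where q: "M = replicate_mset m a + replicate_mset k b"
        "a < b" "a > 0" "b > 0" "m > 0" "k > 0" "a*m + b*k = n"
        by (auto simp: Qlt_def Q_def)
      have "set_mset M = {a,b}" using q by auto
      then have "card (set_mset M) = 2" using q by auto
      moreover have "M \<in> partitions n" using q by (auto simp: partitions_def algebra_simps)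
      ultimately show "M \<in> {M \<in> partitions n. card (set_mset M) = 2}" by simp
    qed
    show "{M \<in> partitions n. card (set_mset M) = 2} \<subseteq> ?g ` Qlt n"
    proof
      fix M assume M: "M \<in> {M \<in> partitions n. card (set_mset M) = 2}"
      then obtain x y where xy: "set_mset M = {x,y}" "x \<noteq> y"
        by (auto simp: card_2_iff)
      define a where "a = min x y"
      define b where "b = max x y"
      have "{a,b} = {x,y}" unfolding a_def b_def by (cases "x \<le> y") (auto simp: min_def max_def)
      moreover have "a < b" using xy(2) unfolding a_def b_def by (cases "x \<le> y") (auto simp: min_def max_def)
      ultimately have ab: "set_mset M = {a,b}" "a < b" using xy(1) by simp_all
      have pos: "a > 0" "b > 0" using M ab by (auto simp: partitions_def)
      define m where "m = count M a"
      define k where "k = count M b"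
      have mk: "m > 0" "k > 0" using ab by (auto simp: m_def k_def)
      have Meq: "M = replicate_mset m a + replicate_mset k b"
      proof (rule multiset_eqI)
        fix z
        show "count M z = count (replicate_mset m a + replicate_mset k b) z"
        proof (cases "z = a \<or> z = b")
          case True then show ?thesis using ab by (auto simp: m_def k_def)
        next
          case False
          then have "z \<notin># M" using ab by auto
          then show ?thesis using False by (auto simp: count_eq_zero_iff)
        qed
      qed
      have "sum_mset M = n" using M by (simp add: partitions_def)
      then have "a*m + b*k = n" using Meq by (simp add: algebra_simps)
      then have "(a,m,b,k) \<in> Qlt n" using pos mk ab by (auto simp: Qlt_def Q_def)
      then show "M \<in> ?g ` Qlt n" using Meq by (auto intro!: image_eqI[where x="(a,m,b,k)"])
    qed
  qed
  show ?thesis unfolding p2_def using card_image[OF inj] img by simp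
qed

theorem corollary2p5:
  fixes n :: nat
  assumes "n > 0"
  shows "real (p2 n) =
    (1/2) * (real (\<Sum>j=1..n-1. ndiv j * ndiv (n - j)) + real (ndiv n) - real (sigma n))"
proof -
  have "(\<Sum>j=1..n-1. ndiv j * ndiv (n - j)) + ndiv n = sigma n + 2 * p2 n"
    using card_Q[of n] card_Q_split[of n] card_Qgt[of n] card_Qlt[of n] card_Qeq[OF assms]
    by linarith
  then have "real ((\<Sum>j=1..n-1. ndiv j * ndiv (n - j)) + ndiv n) = real (sigma n + 2 * p2 n)"
    by (rule arg_cong)
  then show ?thesis by simp
qed

end
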